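(* Let $d\ge1$ and let $P$ be a permutation array of rank $2$ and dimension $d$. Let $\Gamma$ be the star metric graph with central vertex $v$ and edges $e_1,\dots,e_d$ of common length $\ell>0$. For $\mathbf x\in[2]^d$, let $f_{\mathbf x}$ be the function on $\Gamma$ with $f_{\mathbf x}(v)=0$ and constant slope $x_i$ along $e_i$ directed away from $v$. Let $s$ be an integer with $s\ge\sum_ix_i$ for all $\mathbf x\in P$, and let $\Sigma=\langle f_{\mathbf x}:\mathbf x\in P\rangle\subseteq R(s\cdot v)$. Then for every effective divisor $E=v_1+v_2$ of degree $2$ on $\Gamma$ there exists $f\in\Sigma$ with $\mathrm{div}(f)+s\cdot v\ge E$.
   Context: $\mathrm{sl}_\eta(f)$ denotes the outgoing slope. We set $\mathrm{div}(f)=\sum_p(-\sum_{\eta\in T_p}\mathrm{sl}_\eta(f))p$ and $R(D)=\{f:D+\mathrm{div}(f)\ge0\}$. $\langle f_1,\dots,f_n\rangle$ denotes the set of all $\min\{f_1+a_1,\dots,f_n+a_n\}$ with $a_i\in\mathbb R$. $[2]=\{0,1,2\}$, and $[2]^d$ is ordered coordinatewise with meet the coordinatewise minimum. $P\subseteq[r]^d$ is rankable of rank $t$ if each coordinate takes exactly $t+1$ distinct values on $P$. It is totally rankable if each principal subarray $\{\mathbf y\in P:\mathbf y\succeq\mathbf x\}$ is rankable. A redundant point is the coordinatewise minimum of $\ge2$ elements of $P$, each sharing a coordinate with it. A permutation array of rank $r$ and dimension $d$ is a totally rankable $P\subseteq[r]^d$ of rank $r$ with no redundant points. *)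

theory Defs
  imports Complex_Main
begin

text \<open>Points of [r]^d are functions nat => nat, with coordinates indexed by 0..d-1,
  each coordinate in {0..r}, and value 0 outside the index range (extensional).\<close>

definition grid :: "nat \<Rightarrow> nat \<Rightarrow> (nat \<Rightarrow> nat) set" where
  "grid r d = {x. (\<forall>i<d. x i \<le> r) \<and> (\<forall>i\<ge>d. x i = 0)}"

definition dominates :: "nat \<Rightarrow> (nat \<Rightarrow> nat) \<Rightarrow> (nat \<Rightarrow> nat) \<Rightarrow> bool" where
  "dominates d y x \<longleftrightarrow> (\<forall>i<d. x i \<le> y i)"

definition rankable_of_rank :: "nat \<Rightarrow> (nat \<Rightarrow> nat) set \<Rightarrow> int \<Rightarrow> bool" where
  "rankable_of_rank d P t \<longleftrightarrow> (\<forall>i<d. int (card ((\<lambda>y. y i) ` P)) = t + 1)"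

definition rankable :: "nat \<Rightarrow> (nat \<Rightarrow> nat) set \<Rightarrow> bool" where
  "rankable d P \<longleftrightarrow> (\<exists>t. rankable_of_rank d P t)"

definition principal_subarray :: "nat \<Rightarrow> (nat \<Rightarrow> nat) set \<Rightarrow> (nat \<Rightarrow> nat) \<Rightarrow> (nat \<Rightarrow> nat) set" where
  "principal_subarray d P x = {y\<in>P. dominates d y x}"

definition totally_rankable :: "nat \<Rightarrow> nat \<Rightarrow> (nat \<Rightarrow> nat) set \<Rightarrow> bool" where
  "totally_rankable r d P \<longleftrightarrow> (\<forall>x\<in>grid r d. rankable d (principal_subarray d P x))"

definition meet :: "(nat \<Rightarrow> nat) set \<Rightarrow> (nat \<Rightarrow> nat)" where
  "meet S = (\<lambda>i. Min ((\<lambda>y. y i) ` S))"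

definition redundant :: "nat \<Rightarrow> (nat \<Rightarrow> nat) set \<Rightarrow> (nat \<Rightarrow> nat) \<Rightarrow> bool" where
  "redundant d P z \<longleftrightarrow> z \<in> P \<and> (\<exists>S. S \<subseteq> P \<and> z \<notin> S \<and> finite S \<and> card S \<ge> 2 \<and>
       z = meet S \<and> (\<forall>y\<in>S. \<exists>i<d. y i = z i))"

definition permutation_array :: "nat \<Rightarrow> nat \<Rightarrow> (nat \<Rightarrow> nat) set \<Rightarrow> bool" where
  "permutation_array r d P \<longleftrightarrow> P \<subseteq> grid r d \<and> totally_rankable r d P \<and>
     rankable_of_rank d P (int r) \<and> (\<nexists>z. redundant d P z)"

text \<open>A point of the star graph with d edges of length l is encoded as (i,t):
  the point at distance t from the centre along edge e_i (i<d, 0<t<=l);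
  the centre v is encoded as (0,0).\<close>

definition star_center :: "nat \<times> real" where
  "star_center = (0, 0)"

definition star_graph :: "nat \<Rightarrow> real \<Rightarrow> (nat \<times> real) set" where
  "star_graph d l = {star_center} \<union> {(i, t). i < d \<and> 0 < t \<and> t \<le> l}"

definition star_pt :: "nat \<Rightarrow> real \<Rightarrow> nat \<times> real" where
  "star_pt i t = (if t = 0 then star_center else (i, t))"

text \<open>Tangent directions at a point: (i, 1) = along e_i away from v,
  (i, -1) = along e_i towards v.\<close>
definition tangents :: "nat \<Rightarrow> real \<Rightarrow> nat \<times> real \<Rightarrow> (nat \<times> real) set" where
  "tangents d l p =
     (if p = star_center then {(i, 1) | i. i < d}
      else if snd p < l then {(fst p, 1), (fst p, -1)}
      else {(fst p, -1)})"

definition out_slope :: "((nat \<times> real) \<Rightarrow> real) \<Rightarrow> nat \<times> real \<Rightarrow> nat \<times> real \<Rightarrow> real" where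
  "out_slope g p eta =
     Lim (at_right 0) (\<lambda>h. (g (star_pt (fst eta) (snd p + snd eta * h)) - g p) / h)"

definition star_div :: "nat \<Rightarrow> real \<Rightarrow> ((nat \<times> real) \<Rightarrow> real) \<Rightarrow> nat \<times> real \<Rightarrow> real" where
  "star_div d l g p = - (\<Sum>eta\<in>tangents d l p. out_slope g p eta)"

definition fx :: "(nat \<Rightarrow> nat) \<Rightarrow> (nat \<times> real) \<Rightarrow> real" where
  "fx x p = real (x (fst p)) * snd p"

definition trop_span :: "(nat \<Rightarrow> nat) set \<Rightarrow> ((nat \<times> real) \<Rightarrow> real) set" where
  "trop_span P = {(\<lambda>p. Min ((\<lambda>x. fx x p + a x) ` P)) | a. True}"

end

theory Submission
  imports Defs
begin


lemma lines_limit: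
  fixes c m :: "'k \<Rightarrow> real"
  assumes fin: "finite K" and k0: "k0 \<in> K" and cmin: "\<forall>k\<in>K. c k0 \<le> c k"
    and mmin: "\<forall>k\<in>K. c k = c k0 \<longrightarrow> m k0 \<le> m k"
  shows "((\<lambda>h. (Min ((\<lambda>k. c k + m k * h) ` K) - Min (c ` K)) / h) \<longlongrightarrow> m k0) (at_right 0)"
proof -
  have ev: "\<forall>k\<in>K. eventually (\<lambda>h. c k0 + m k0 * h \<le> c k + m k * h) (at_right (0::real))"
  proof
    fix k assume kK: "k \<in> K"
    show "eventually (\<lambda>h. c k0 + m k0 * h \<le> c k + m k * h) (at_right (0::real))"
    proof (cases "c k = c k0")
      case True
      then have "m k0 \<le> m k" using mmin kK by auto
      then have "\<forall>h>0. c k0 + m k0 * h \<le> c k + m k * h" using True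
        by (simp add: mult_right_mono)
      then show ?thesis using eventually_at_right_less[of 0]
        by (auto elim: eventually_mono)
    next
      case False
      then have d: "c k - c k0 > 0" using cmin kK by force
      have "((\<lambda>h. (m k0 - m k) * h) \<longlongrightarrow> (m k0 - m k) * 0) (at_right (0::real))"
        by (intro tendsto_intros)
      then have "eventually (\<lambda>h. (m k0 - m k) * h < c k - c k0) (at_right (0::real))"
        using d by (intro order_tendstoD(2)) auto
      then show ?thesis by (rule eventually_mono) (simp add: algebra_simps)
    qed
  qed
  have ev2: "eventually (\<lambda>h. (\<forall>k\<in>K. c k0 + m k0 * h \<le> c k + m k * h) \<and> 0 < h) (at_right (0::real))"
    using eventually_ball_finite[OF fin ev] eventually_at_right_less[of 0]
    by (simp add: eventually_conj_iff)
  have "eventually (\<lambda>h. m k0 = (Min ((\<lambda>k. c k + m k * h) ` K) - Min (c ` K)) / h) (at_right (0::real))"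
  proof (rule eventually_mono[OF ev2])
    fix h :: real assume h: "(\<forall>k\<in>K. c k0 + m k0 * h \<le> c k + m k * h) \<and> 0 < h"
    have "Min ((\<lambda>k. c k + m k * h) ` K) = c k0 + m k0 * h"
      using h fin k0 by (intro Min_eqI) auto
    moreover have "Min (c ` K) = c k0"
      using cmin fin k0 by (intro Min_eqI) auto
    ultimately show "m k0 = (Min ((\<lambda>k. c k + m k * h) ` K) - Min (c ` K)) / h"
      using h by simp
  qed
  then show ?thesis by (rule Lim_transform_eventually[OF tendsto_const])
qed

definition Ff :: "(nat \<Rightarrow> nat) set \<Rightarrow> ((nat \<Rightarrow> nat) \<Rightarrow> real) \<Rightarrow> nat \<times> real \<Rightarrow> real" where
  "Ff P a = (\<lambda>p. Min ((\<lambda>x. fx x p + a x) ` P))"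

definition Gf :: "(nat \<Rightarrow> nat) set \<Rightarrow> ((nat \<Rightarrow> nat) \<Rightarrow> real) \<Rightarrow> nat \<Rightarrow> real \<Rightarrow> real" where
  "Gf P a i s = Min ((\<lambda>x. real (x i) * s + a x) ` P)"

lemma Ff_star_pt: "Ff P a (star_pt i s) = Gf P a i s"
  by (cases "s = 0") (simp_all add: Ff_def Gf_def star_pt_def star_center_def fx_def)

lemma Ff_pt: "t \<noteq> 0 \<Longrightarrow> Ff P a (i, t) = Gf P a i t"
  using Ff_star_pt[of P a i t] by (simp add: star_pt_def)

lemma Ff_center: "Ff P a star_center = Gf P a i 0"
  using Ff_star_pt[of P a i 0] by (simp add: star_pt_def)

lemma obtain_lexmin:
  fixes c g :: "'k \<Rightarrow> real"
  assumes "finite P" "u \<in> P" "\<forall>x\<in>P. c u \<le> c x"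
  shows "\<exists>k0\<in>P. (\<forall>x\<in>P. c k0 \<le> c x) \<and> (\<forall>x\<in>P. c x = c k0 \<longrightarrow> g k0 \<le> g x)"
proof -
  let ?M = "{x\<in>P. c x = c u}"
  have fM: "finite ?M" using assms by auto
  have nM: "?M \<noteq> {}" using assms by auto
  have "Min (g ` ?M) \<in> g ` ?M" using Min_in[of "g ` ?M"] fM nM by blast
  then obtain k0 where k0: "k0 \<in> ?M" "g k0 = Min (g ` ?M)" by (metis (no_types, lifting) imageE)
  have "\<forall>x\<in>?M. g k0 \<le> g x" using k0 fM by auto
  then show ?thesis using k0 assms by (intro bexI[of _ k0]) auto
qed

lemma out_slope_val:
  assumes fin: "finite P" and fp: "Ff P a p = Gf P a i (snd p)" and k0: "k0 \<in> P"
    and cmin: "\<forall>x\<in>P. real (k0 i) * snd p + a k0 \<le> real (x i) * snd p + a x"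
    and mmin: "\<forall>x\<in>P. real (x i) * snd p + a x = real (k0 i) * snd p + a k0 \<longrightarrow> \<sigma> * real (k0 i) \<le> \<sigma> * real (x i)"
  shows "out_slope (Ff P a) p (i, \<sigma>) = \<sigma> * real (k0 i)"
proof -
  define t where "t = snd p"
  have eq: "(\<lambda>h. (Ff P a (star_pt (fst (i, \<sigma>)) (snd p + snd (i, \<sigma>) * h)) - Ff P a p) / h)
      = (\<lambda>h. (Min ((\<lambda>x. (real (x i) * t + a x) + (\<sigma> * real (x i)) * h) ` P)
               - Min ((\<lambda>x. real (x i) * t + a x) ` P)) / h)"
    unfolding Ff_star_pt fp t_def[symmetric] Gf_def
    by (simp add: algebra_simps)
  have "((\<lambda>h. (Min ((\<lambda>x. (real (x i) * t + a x) + (\<sigma> * real (x i)) * h) ` P)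
               - Min ((\<lambda>x. real (x i) * t + a x) ` P)) / h) \<longlongrightarrow> \<sigma> * real (k0 i)) (at_right 0)"
    using lines_limit[OF fin k0, of "\<lambda>x. real (x i) * t + a x" "\<lambda>x. \<sigma> * real (x i)"] cmin mmin
    unfolding t_def by auto
  then show ?thesis unfolding out_slope_def eq
    by (rule tendsto_Lim[OF trivial_limit_at_right_real])
qed

lemma div_edge:
  assumes fin: "finite P" and i: "i < d" and t: "0 < t" "t \<le> l"
    and u: "u \<in> P" "\<forall>x\<in>P. real (u i) * t + a u \<le> real (x i) * t + a x"
    and u': "u' \<in> P" "\<forall>x\<in>P. real (u' i) * t + a u' \<le> real (x i) * t + a x"
  shows "star_div d l (Ff P a) (i, t) \<ge> real (u i) - real (u' i)"
proof -
  let ?c = "\<lambda>x. real (x i) * t + a x"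
  obtain k0 where k0: "k0 \<in> P" "\<forall>x\<in>P. ?c k0 \<le> ?c x"
     "\<forall>x\<in>P. ?c x = ?c k0 \<longrightarrow> 1 * real (k0 i) \<le> 1 * real (x i)"
    using obtain_lexmin[OF fin u(1), of ?c "\<lambda>x. 1 * real (x i)"] u(2) by blast
  obtain k1 where k1: "k1 \<in> P" "\<forall>x\<in>P. ?c k1 \<le> ?c x"
     "\<forall>x\<in>P. ?c x = ?c k1 \<longrightarrow> (-1) * real (k1 i) \<le> (-1) * real (x i)"
    using obtain_lexmin[OF fin u(1), of ?c "\<lambda>x. (-1) * real (x i)"] u(2) by blast
  have fp: "Ff P a (i, t) = Gf P a i (snd (i, t))" using t Ff_pt[of t P a i] by simp
  have o1: "out_slope (Ff P a) (i, t) (i, 1) = 1 * real (k0 i)"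
    using out_slope_val[OF fin fp k0(1)] k0 by simp
  have o2: "out_slope (Ff P a) (i, t) (i, -1) = (-1) * real (k1 i)"
    using out_slope_val[OF fin fp k1(1)] k1 by simp
  have "?c k0 = ?c u'" using k0 u' by force
  then have "real (k0 i) \<le> real (u' i)" using k0(3) u' by auto
  moreover have "?c k1 = ?c u" using k1 u by force
  then have "real (u i) \<le> real (k1 i)" using k1(3) u by auto
  moreover have nc: "(i, t) \<noteq> star_center" using t by (simp add: star_center_def)
  ultimately show ?thesis
  proof (cases "t < l")
    case True
    then have "tangents d l (i, t) = {(i, 1), (i, -1)}" using nc by (simp add: tangents_def)
    then have "star_div d l (Ff P a) (i, t) = real (k1 i) - real (k0 i)"
      unfolding star_div_def using o1 o2 by simp
    then show ?thesis using \<open>real (k0 i) \<le> real (u' i)\<close> \<open>real (u i) \<le> real (k1 i)\<close> by simp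
  next
    case False
    then have "tangents d l (i, t) = {(i, -1)}" using nc by (simp add: tangents_def)
    then have "star_div d l (Ff P a) (i, t) = real (k1 i)"
      unfolding star_div_def using o2 by simp
    then show ?thesis using \<open>real (u i) \<le> real (k1 i)\<close> by simp
  qed
qed

lemma div_center:
  assumes fin: "finite P" and i: "i < d"
    and y: "y \<in> P" "\<forall>x\<in>P. a y \<le> a x" and y': "y' \<in> P" "\<forall>x\<in>P. a y' \<le> a x"
  shows "star_div d l (Ff P a) star_center \<ge> real (y i) - real (y' i) - (\<Sum>k<d. real (y k))"
proof -
  have bnd: "out_slope (Ff P a) star_center (k, 1) \<le> (if k = i then real (y' i) else real (y k))" for k
  proof -
    let ?c = "\<lambda>x. real (x k) * 0 + a x"
    obtain k0 where k0: "k0 \<in> P" "\<forall>x\<in>P. ?c k0 \<le> ?c x"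
       "\<forall>x\<in>P. ?c x = ?c k0 \<longrightarrow> 1 * real (k0 k) \<le> 1 * real (x k)"
      using obtain_lexmin[OF fin y(1), of ?c "\<lambda>x. 1 * real (x k)"] y(2) by auto
    have fp: "Ff P a star_center = Gf P a k (snd star_center)"
      using Ff_center[of P a k] by (simp add: star_center_def)
    have o: "out_slope (Ff P a) star_center (k, 1) = 1 * real (k0 k)"
      using out_slope_val[OF fin fp k0(1)] k0 by (simp add: star_center_def)
    have "a k0 = a y" "a k0 = a y'" using k0 y y' by force+
    then have "real (k0 k) \<le> real (y k)" "real (k0 k) \<le> real (y' k)" using k0 y y' by auto
    then show ?thesis using o by auto
  qed
  have tg: "tangents d l star_center = (\<lambda>k. (k, 1)) ` {..<d}"
    by (auto simp: tangents_def)
  have "(\<Sum>eta\<in>tangents d l star_center. out_slope (Ff P a) star_center eta)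
      = (\<Sum>k<d. out_slope (Ff P a) star_center (k, 1))"
    unfolding tg by (subst sum.reindex) (auto simp: inj_on_def)
  also have "\<dots> \<le> (\<Sum>k<d. (if k = i then real (y' i) else real (y k)))"
    by (rule sum_mono) (rule bnd)
  also have "\<dots> = (\<Sum>k<d. real (y k) + (if k = i then real (y' i) - real (y i) else 0))"
    by (rule sum.cong) auto
  also have "\<dots> = (\<Sum>k<d. real (y k)) + (real (y' i) - real (y i))"
    using i by (simp add: sum.distrib)
  finally show ?thesis unfolding star_div_def by simp
qed



lemma finite_grid: "finite (grid r d)"
proof -
  have "inj_on (\<lambda>x. map x [0..<d]) (grid r d)"
  proof (rule inj_onI)
    fix x y :: "nat \<Rightarrow> nat" assume x: "x \<in> grid r d" and y: "y \<in> grid r d"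
      and e: "map x [0..<d] = map y [0..<d]"
    show "x = y"
    proof
      fix k show "x k = y k"
      proof (cases "k < d")
        case True
        have "\<forall>z\<in>{0..<d}. x z = y z" using e by simp
        then show ?thesis using True by simp
      next
        case False then show ?thesis using x y by (simp add: grid_def)
      qed
    qed
  qed
  moreover have "(\<lambda>x. map x [0..<d]) ` grid r d \<subseteq> {xs. set xs \<subseteq> {..r} \<and> length xs = d}"
    by (auto simp: grid_def)
  moreover have "finite {xs. set xs \<subseteq> {..r} \<and> length xs = d}"
    by (rule finite_lists_length_eq) auto
  ultimately show ?thesis using finite_imageD finite_subset by blast
qed

lemma pa_finite: "permutation_array r d P \<Longrightarrow> finite P"
  using finite_grid finite_subset unfolding permutation_array_def by blast

lemma pa_cod:
  assumes "permutation_array 2 d P" "i < d"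
  shows "(\<lambda>y. y i) ` P = {0,1,2}"
proof -
  have sub: "(\<lambda>y. y i) ` P \<subseteq> {0,1,2}"
  proof
    fix v assume "v \<in> (\<lambda>y. y i) ` P"
    then obtain y where "y \<in> P" "v = y i" by blast
    then have "v \<le> 2" using assms unfolding permutation_array_def grid_def by auto
    then show "v \<in> {0,1,2}" by auto
  qed
  have "int (card ((\<lambda>y. y i) ` P)) = int 2 + 1"
    using assms unfolding permutation_array_def rankable_of_rank_def by blast
  then have "card ((\<lambda>y. y i) ` P) = card {0::nat,1,2}" by simp
  then show ?thesis using sub by (intro card_subset_eq) auto
qed

lemma pa_rk:
  assumes pa: "permutation_array 2 d P" and i: "i < d" and j: "j < d" and a: "a \<le> 2"
  shows "card ((\<lambda>y. y j) ` {y\<in>P. a \<le> y i}) = card ((\<lambda>y. y i) ` {y\<in>P. a \<le> y i})"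
proof -
  define x where "x = (\<lambda>k. if k = i then a else 0::nat)"
  have xg: "x \<in> grid 2 d" using a i by (auto simp: x_def grid_def)
  have ps: "principal_subarray d P x = {y\<in>P. a \<le> y i}"
    using i by (auto simp: principal_subarray_def dominates_def x_def)
  have "rankable d {y\<in>P. a \<le> y i}"
    using pa xg ps unfolding permutation_array_def totally_rankable_def by metis
  then obtain t where "\<forall>k<d. int (card ((\<lambda>y. y k) ` {y\<in>P. a \<le> y i})) = t + 1"
    unfolding rankable_def rankable_of_rank_def by blast
  then have "int (card ((\<lambda>y. y j) ` {y\<in>P. a \<le> y i})) = t + 1"
      "int (card ((\<lambda>y. y i) ` {y\<in>P. a \<le> y i})) = t + 1" using i j by blast+
  then show ?thesis by linarith
qed

lemma pa_r1:
  assumes pa: "permutation_array 2 d P" and i: "i < d" and j: "j < d"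
  shows "card ((\<lambda>y. y j) ` {y\<in>P. 1 \<le> y i}) = 2"
proof -
  have c: "(\<lambda>y. y i) ` P = {0,1,2}" by (rule pa_cod[OF pa i])
  have "(\<lambda>y. y i) ` {y\<in>P. 1 \<le> y i} = {1,2}"
  proof
    show "(\<lambda>y. y i) ` {y\<in>P. 1 \<le> y i} \<subseteq> {1,2}"
    proof
      fix v assume "v \<in> (\<lambda>y. y i) ` {y\<in>P. 1 \<le> y i}"
      then obtain y where y: "y \<in> P" "1 \<le> y i" "v = y i" by blast
      have "y i \<in> {0,1,2}" using c y(1) by blast
      then show "v \<in> {1,2}" using y by auto
    qed
    have "1 \<in> (\<lambda>y. y i) ` P" "2 \<in> (\<lambda>y. y i) ` P" using c by auto
    then show "{1,2} \<subseteq> (\<lambda>y. y i) ` {y\<in>P. 1 \<le> y i}" by force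
  qed
  then show ?thesis using pa_rk[OF pa i j, of 1] by simp
qed

lemma pa_r2:
  assumes pa: "permutation_array 2 d P" and i: "i < d" and j: "j < d"
  shows "card ((\<lambda>y. y j) ` {y\<in>P. 2 \<le> y i}) = 1"
proof -
  have c: "(\<lambda>y. y i) ` P = {0,1,2}" by (rule pa_cod[OF pa i])
  have "(\<lambda>y. y i) ` {y\<in>P. 2 \<le> y i} = {2}"
  proof
    show "(\<lambda>y. y i) ` {y\<in>P. 2 \<le> y i} \<subseteq> {2}"
    proof
      fix v assume "v \<in> (\<lambda>y. y i) ` {y\<in>P. 2 \<le> y i}"
      then obtain y where y: "y \<in> P" "2 \<le> y i" "v = y i" by blast
      have "y i \<in> {0,1,2}" using c y(1) by blast
      then show "v \<in> {2}" using y by auto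
    qed
    have "2 \<in> (\<lambda>y. y i) ` P" using c by auto
    then show "{2} \<subseteq> (\<lambda>y. y i) ` {y\<in>P. 2 \<le> y i}" by force
  qed
  then show ?thesis using pa_rk[OF pa i j, of 2] by simp
qed

lemma cross_half:
  fixes P :: "(nat \<Rightarrow> nat) set"
  assumes fin: "finite P" and codi: "(\<lambda>y. y i) ` P = {0,1,2}" and codj: "(\<lambda>y. y j) ` P = {0,1,2}"
    and r1: "card ((\<lambda>y. y j) ` {y\<in>P. 1 \<le> y i}) = 2"
    and r2: "card ((\<lambda>y. y j) ` {y\<in>P. 2 \<le> y i}) = 1"
    and cross: "\<forall>x\<in>P. x i = e \<or> x j = c"
  shows "e = 1"
proof -
  have "e \<noteq> 2"
  proof
    assume e2: "e = 2"
    have sb: "{0,1,2} - {c} \<subseteq> (\<lambda>y. y j) ` {y\<in>P. 2 \<le> y i}"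
    proof
      fix v assume v: "v \<in> {0,1,2} - {c}"
      then have "v \<in> (\<lambda>y. y j) ` P" using codj by blast
      then obtain y where y: "y \<in> P" "v = y j" by blast
      then have "y i = 2" using cross v e2 by auto
      then have "y \<in> {y\<in>P. 2 \<le> y i}" using y by simp
      then show "v \<in> (\<lambda>y. y j) ` {y\<in>P. 2 \<le> y i}" using y by (intro rev_image_eqI)
    qed
    have "finite ((\<lambda>y. y j) ` {y\<in>P. 2 \<le> y i})" using fin by auto
    from card_mono[OF this sb] have "card ({0,1,2} - {c}) \<le> 1" using r2 by simp
    moreover have "card ({0::nat,1,2} - {c}) \<ge> 2"
      by (cases "c = 0"; cases "c = 1"; cases "c = 2"; simp)
    ultimately show False by simp
  qed
  moreover have "e \<in> {1,2}"
  proof (rule ccontr)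
    assume ne: "e \<notin> {1,2}"
    have "(\<lambda>y. y j) ` {y\<in>P. 1 \<le> y i} \<subseteq> {c}"
    proof
      fix v assume "v \<in> (\<lambda>y. y j) ` {y\<in>P. 1 \<le> y i}"
      then obtain y where y: "y \<in> P" "1 \<le> y i" "v = y j" by blast
      have "y i \<in> {0,1,2}" using codi y(1) by blast
      then have "y i \<noteq> e" using ne y(2) by auto
      then show "v \<in> {c}" using cross y by auto
    qed
    from card_mono[OF _ this] have "card ((\<lambda>y. y j) ` {y\<in>P. 1 \<le> y i}) \<le> 1" by simp
    then show False using r1 by simp
  qed
  ultimately show ?thesis by auto
qed

lemma no_cross:
  assumes pa: "permutation_array 2 d P" and i: "i < d" and j: "j < d" and ij: "i \<noteq> j"
  shows "\<not> (\<forall>x\<in>P. x i = e \<or> x j = c)"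
proof
  assume cross: "\<forall>x\<in>P. x i = e \<or> x j = c"
  have fin: "finite P" using pa_finite[OF pa] .
  have codi: "(\<lambda>y. y i) ` P = {0,1,2}" using pa_cod[OF pa i] .
  have codj: "(\<lambda>y. y j) ` P = {0,1,2}" using pa_cod[OF pa j] .
  have e1: "e = 1" using cross_half[OF fin codi codj pa_r1[OF pa i j] pa_r2[OF pa i j] cross] .
  have c1: "c = 1" using cross_half[OF fin codj codi pa_r1[OF pa j i] pa_r2[OF pa j i]] cross by blast
  have sb: "{0,1,2} \<subseteq> (\<lambda>y. y j) ` {y\<in>P. 1 \<le> y i}"
  proof
    fix v :: nat assume v: "v \<in> {0,1,2}"
    show "v \<in> (\<lambda>y. y j) ` {y\<in>P. 1 \<le> y i}"
    proof (cases "v = 1")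
      case True
      have "2 \<in> (\<lambda>y. y i) ` P" using codi by blast
      then obtain y where y: "y \<in> P" "y i = 2" by force
      then have "y j = 1" using cross e1 c1 by force
      moreover have "y \<in> {y\<in>P. 1 \<le> y i}" using y by simp
      ultimately show ?thesis using True by (intro rev_image_eqI[of y]) auto
    next
      case False
      have "v \<in> (\<lambda>y. y j) ` P" using codj v by blast
      then obtain y where y: "y \<in> P" "y j = v" by force
      then have "y i = 1" using cross e1 c1 False by force
      then have "y \<in> {y\<in>P. 1 \<le> y i}" using y by simp
      then show ?thesis using y by (intro rev_image_eqI[of y]) auto
    qed
  qed
  have "finite ((\<lambda>y. y j) ` {y\<in>P. 1 \<le> y i})" using fin by auto
  from card_mono[OF this sb] have "card {0::nat,1,2} \<le> 2" using pa_r1[OF pa i j] by simp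
  then show False by simp
qed

lemma exists_min:
  fixes c :: "'k \<Rightarrow> real"
  assumes "finite P" "P \<noteq> {}"
  shows "\<exists>u\<in>P. \<forall>x\<in>P. c u \<le> c x"
proof -
  have "Min (c ` P) \<in> c ` P" using assms by auto
  then obtain u where "u \<in> P" "c u = Min (c ` P)" by (metis imageE)
  then show ?thesis using assms by (intro bexI[of _ u]) auto
qed

lemma edge_ge0:
  assumes "finite P" "P \<noteq> {}" "i < d" "0 < t" "t \<le> l"
  shows "star_div d l (Ff P a) (i, t) \<ge> 0"
proof -
  obtain u where "u \<in> P" "\<forall>x\<in>P. real (u i) * t + a u \<le> real (x i) * t + a x"
    using exists_min[OF assms(1,2), of "\<lambda>x. real (x i) * t + a x"] by blast
  from div_edge[OF assms(1,3,4,5) this this] show ?thesis by simp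
qed

lemma center_ge0:
  assumes "finite P" "P \<noteq> {}" "0 < d" and sb: "\<forall>x\<in>P. (\<Sum>i<d. int (x i)) \<le> s"
  shows "star_div d l (Ff P a) star_center + real_of_int s \<ge> 0"
proof -
  obtain y where y: "y \<in> P" "\<forall>x\<in>P. a y \<le> a x"
    using exists_min[OF assms(1,2), of a] by blast
  have "star_div d l (Ff P a) star_center \<ge> - (\<Sum>k<d. real (y k))"
    using div_center[OF assms(1,3) y y, of l] by simp
  moreover have "(\<Sum>k<d. real (y k)) \<le> real_of_int s"
  proof -
    have h1: "(\<Sum>i<d. int (y i)) \<le> s" using sb y(1) by blast
    have h2: "real_of_int (\<Sum>i<d. int (y i)) = (\<Sum>k<d. real (y k))" by simp
    show ?thesis using h1 h2 by (metis of_int_le_iff)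
  qed
  ultimately show ?thesis by simp
qed

lemma choose_D:
  fixes w :: "(nat \<Rightarrow> nat) \<Rightarrow> real"
  assumes pa: "permutation_array 2 d P" and i: "i < d" and j: "j < d" and ij: "i \<noteq> j"
  shows "\<exists>D. (\<exists>u\<in>P. \<exists>u'\<in>P. u i \<noteq> u' i \<and> w u \<le> D \<and> w u' \<le> D)
           \<and> (\<exists>z\<in>P. \<exists>z'\<in>P. z j \<noteq> z' j \<and> D \<le> w z \<and> D \<le> w z')"
proof -
  have fin: "finite P" using pa_finite[OF pa] .
  have codi: "(\<lambda>y. y i) ` P = {0,1,2}" using pa_cod[OF pa i] .
  define Pr where "Pr = {pq \<in> P \<times> P. fst pq i \<noteq> snd pq i}"
  have fPr: "finite Pr" using fin unfolding Pr_def by auto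
  have "0 \<in> (\<lambda>y. y i) ` P" "1 \<in> (\<lambda>y. y i) ` P" using codi by auto
  then obtain y0 y1 where "y0 \<in> P" "y0 i = 0" "y1 \<in> P" "y1 i = 1" by force
  then have "(y0, y1) \<in> Pr" unfolding Pr_def by auto
  then have nPr: "Pr \<noteq> {}" by auto
  define g where "g = (\<lambda>pq. max (w (fst pq)) (w (snd pq)))"
  define al where "al = Min (g ` Pr)"
  have "al \<in> g ` Pr" unfolding al_def using fPr nPr by auto
  then obtain pq where pq: "pq \<in> Pr" "g pq = al" by (metis imageE)
  have almin: "\<forall>pq\<in>Pr. al \<le> g pq" unfolding al_def using fPr by auto
  have A: "\<exists>u\<in>P. \<exists>u'\<in>P. u i \<noteq> u' i \<and> w u \<le> al \<and> w u' \<le> al"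
    using pq unfolding Pr_def g_def by (intro bexI[of _ "fst pq"] bexI[of _ "snd pq"]) auto
  have B: "\<exists>z\<in>P. \<exists>z'\<in>P. z j \<noteq> z' j \<and> al \<le> w z \<and> al \<le> w z'"
  proof (rule ccontr)
    assume H: "\<not> ?thesis"
    have low: "x i = y i" if "x \<in> P" "y \<in> P" "w x < al" "w y < al" for x y
    proof (rule ccontr)
      assume "x i \<noteq> y i"
      then have "(x, y) \<in> Pr" using that unfolding Pr_def by auto
      then have "al \<le> g (x, y)" using almin by blast
      then show False using that unfolding g_def by simp
    qed
    have high: "x j = y j" if "x \<in> P" "y \<in> P" "al \<le> w x" "al \<le> w y" for x y
      using H that by blast
    define e where "e = (SOME x. x \<in> P \<and> w x < al) i"
    define c where "c = (SOME x. x \<in> P \<and> al \<le> w x) j"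
    have "\<forall>x\<in>P. x i = e \<or> x j = c"
    proof
      fix x assume x: "x \<in> P"
      show "x i = e \<or> x j = c"
      proof (cases "w x < al")
        case True
        then have "(SOME x. x \<in> P \<and> w x < al) \<in> P \<and> w (SOME x. x \<in> P \<and> w x < al) < al"
          using someI[of "\<lambda>z. z \<in> P \<and> w z < al" x] x True by blast
        then show ?thesis using low[OF x] True unfolding e_def by auto
      next
        case False
        then have "(SOME x. x \<in> P \<and> al \<le> w x) \<in> P \<and> al \<le> w (SOME x. x \<in> P \<and> al \<le> w x)"
          using someI[of "\<lambda>z. z \<in> P \<and> al \<le> w z" x] x False by simp
        then show ?thesis using high[OF x] False unfolding c_def by auto
      qed
    qed
    then show False using no_cross[OF pa i j ij] by blast
  qed
  show ?thesis using A B by blast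
qed

lemma finish:
  fixes P :: "(nat \<Rightarrow> nat) set" and a :: "(nat \<Rightarrow> nat) \<Rightarrow> real"
  assumes fin: "finite P" and ne: "P \<noteq> {}" and d: "d \<ge> 1"
    and sb: "\<forall>x\<in>P. (\<Sum>i<d. int (x i)) \<le> s"
    and cen: "star_div d l (Ff P a) star_center + real_of_int s
              \<ge> (if star_center = v1 then 1 else 0) + (if star_center = v2 then 1 else 0)"
    and edge: "\<And>i t. i < d \<Longrightarrow> 0 < t \<Longrightarrow> t \<le> l \<Longrightarrow> ((i, t) = v1 \<or> (i, t) = v2) \<Longrightarrow>
          star_div d l (Ff P a) (i, t) \<ge> (if (i, t) = v1 then 1 else 0) + (if (i, t) = v2 then 1 else 0)"
  shows "\<exists>f\<in>trop_span P. \<forall>p\<in>star_graph d l.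
           star_div d l f p + (if p = star_center then real_of_int s else 0)
             \<ge> (if p = v1 then 1 else 0) + (if p = v2 then 1 else 0)"
proof (rule bexI[of _ "Ff P a"])
  show "Ff P a \<in> trop_span P" unfolding trop_span_def Ff_def by blast
  show "\<forall>p\<in>star_graph d l. star_div d l (Ff P a) p + (if p = star_center then real_of_int s else 0)
             \<ge> (if p = v1 then 1 else 0) + (if p = v2 then 1 else 0)"
  proof
    fix p assume p: "p \<in> star_graph d l"
    show "star_div d l (Ff P a) p + (if p = star_center then real_of_int s else 0)
             \<ge> (if p = v1 then 1 else 0) + (if p = v2 then 1 else 0)"
    proof (cases "p = star_center")
      case True then show ?thesis using cen by simp
    next
      case False
      then obtain i t where it: "p = (i, t)" "i < d" "0 < t" "t \<le> l"
        using p unfolding star_graph_def by auto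
      show ?thesis
      proof (cases "p = v1 \<or> p = v2")
        case True then show ?thesis using edge[OF it(2-4)] it(1) False by auto
      next
        case F2: False
        then show ?thesis using edge_ge0[OF fin ne it(2-4), of a] it(1) False by auto
      qed
    qed
  qed
qed



lemma real_sum_le:
  assumes sb: "\<forall>x\<in>P. (\<Sum>i<d. int (x i)) \<le> s" and y: "y \<in> P"
  shows "(\<Sum>k<d. real (y k)) \<le> real_of_int s"
proof -
  have h1: "(\<Sum>i<d. int (y i)) \<le> s" using sb y by blast
  have h2: "real_of_int (\<Sum>i<d. int (y i)) = (\<Sum>k<d. real (y k))" by simp
  show ?thesis using h1 h2 by (metis of_int_le_iff)
qed

lemma pa_pt:
  assumes "permutation_array 2 d P" "k < d" "v \<in> {0,1,2}"
  shows "\<exists>y\<in>P. y k = v"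
  using pa_cod[OF assms(1,2)] assms(3) by (metis imageE)

lemma pa_val:
  assumes "permutation_array 2 d P" "k < d" "x \<in> P"
  shows "x k = 0 \<or> x k = 1 \<or> x k = 2"
  using pa_cod[OF assms(1,2)] assms(3) by blast

lemma pa_ne:
  assumes "permutation_array 2 d P" "d \<ge> 1"
  shows "P \<noteq> {}"
  using pa_pt[OF assms(1), of 0 0] assms(2) by auto

lemma center_ne: "0 < t \<Longrightarrow> (i, t) \<noteq> star_center"
  by (simp add: star_center_def)

lemma center_ne2: "0 < t \<Longrightarrow> star_center \<noteq> (i, t)"
  by (simp add: star_center_def)

lemma case_CC:
  assumes pa: "permutation_array 2 d P" and d: "d \<ge> 1"
    and sb: "\<forall>x\<in>P. (\<Sum>i<d. int (x i)) \<le> s"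
  shows "\<exists>f\<in>trop_span P. \<forall>p\<in>star_graph d l.
           star_div d l f p + (if p = star_center then real_of_int s else 0)
             \<ge> (if p = star_center then 1 else 0) + (if p = star_center then 1 else 0)"
proof -
  have fin: "finite P" using pa_finite[OF pa] .
  have ne: "P \<noteq> {}" using pa_ne[OF pa d] .
  obtain y where y: "y \<in> P" "y 0 = 2" using pa_pt[OF pa, of 0 2] d by auto
  obtain y' where y': "y' \<in> P" "y' 0 = 0" using pa_pt[OF pa, of 0 0] d by auto
  let ?a = "\<lambda>x::nat\<Rightarrow>nat. 0::real"
  have "star_div d l (Ff P ?a) star_center \<ge> real (y 0) - real (y' 0) - (\<Sum>k<d. real (y k))"
    using div_center[OF fin _ y(1) _ y'(1), of 0 d ?a l] d by simp
  then have cen: "star_div d l (Ff P ?a) star_center + real_of_int s \<ge> 2"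
    using real_sum_le[OF sb y(1)] y y' by simp
  show ?thesis
    by (rule finish[OF fin ne d sb, where l=l and a="?a"]) (use cen center_ne in auto)
qed

lemma case_CE:
  assumes pa: "permutation_array 2 d P" and d: "d \<ge> 1"
    and sb: "\<forall>x\<in>P. (\<Sum>i<d. int (x i)) \<le> s"
    and i: "i < d" and t: "0 < t" "t \<le> l"
  shows "\<exists>f\<in>trop_span P. \<forall>p\<in>star_graph d l.
           star_div d l f p + (if p = star_center then real_of_int s else 0)
             \<ge> (if p = star_center then 1 else 0) + (if p = (i, t) then 1 else 0)"
proof -
  have fin: "finite P" using pa_finite[OF pa] .
  have ne: "P \<noteq> {}" using pa_ne[OF pa d] .
  obtain y where y: "y \<in> P" "y i = 2" using pa_pt[OF pa i, of 2] by auto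
  obtain y' where y': "y' \<in> P" "y' i = 1" using pa_pt[OF pa i, of 1] by auto
  obtain u' where u': "u' \<in> P" "u' i = 0" using pa_pt[OF pa i, of 0] by auto
  define a where "a = (\<lambda>x::nat\<Rightarrow>nat. if 1 \<le> x i then 0 else t)"
  have amin: "\<forall>x\<in>P. a y \<le> a x" "\<forall>x\<in>P. a y' \<le> a x" using y y' t by (auto simp: a_def)
  have "star_div d l (Ff P a) star_center \<ge> real (y i) - real (y' i) - (\<Sum>k<d. real (y k))"
    using div_center[OF fin i y(1) amin(1) y'(1) amin(2), of l] by simp
  then have cen: "star_div d l (Ff P a) star_center + real_of_int s \<ge> 1"
    using real_sum_le[OF sb y(1)] y y' by simp
  have cx: "\<forall>x\<in>P. t \<le> real (x i) * t + a x"
  proof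
    fix x assume "x \<in> P"
    show "t \<le> real (x i) * t + a x"
    proof (cases "1 \<le> x i")
      case True
      then have "1 \<le> real (x i)" by simp
      then have "1 * t \<le> real (x i) * t" using t by (intro mult_right_mono) auto
      then show ?thesis using True by (simp add: a_def)
    next
      case False then show ?thesis using t by (simp add: a_def)
    qed
  qed
  have "star_div d l (Ff P a) (i, t) \<ge> real (y' i) - real (u' i)"
    using div_edge[OF fin i t y'(1) _ u'(1)] cx y' u' by (simp add: a_def)
  then have ed: "star_div d l (Ff P a) (i, t) \<ge> 1" using y' u' by simp
  show ?thesis
    by (rule finish[OF fin ne d sb, where l=l and a=a]) (use cen ed center_ne center_ne2 t in auto)
qed

lemma case_same:
  assumes pa: "permutation_array 2 d P" and d: "d \<ge> 1"
    and sb: "\<forall>x\<in>P. (\<Sum>i<d. int (x i)) \<le> s"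
    and i: "i < d" and t: "0 < t1" "t1 \<le> t2" "t2 \<le> l"
  shows "\<exists>f\<in>trop_span P. \<forall>p\<in>star_graph d l.
           star_div d l f p + (if p = star_center then real_of_int s else 0)
             \<ge> (if p = (i, t1) then 1 else 0) + (if p = (i, t2) then 1 else 0)"
proof -
  have fin: "finite P" using pa_finite[OF pa] .
  have ne: "P \<noteq> {}" using pa_ne[OF pa d] .
  obtain y2 where y2: "y2 \<in> P" "y2 i = 2" using pa_pt[OF pa i, of 2] by auto
  obtain y1 where y1: "y1 \<in> P" "y1 i = 1" using pa_pt[OF pa i, of 1] by auto
  obtain y0 where y0: "y0 \<in> P" "y0 i = 0" using pa_pt[OF pa i, of 0] by auto
  define a where "a = (\<lambda>x::nat\<Rightarrow>nat. if x i = 2 then 0 else if x i = 1 then t1 else t1 + t2)"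
  have vals: "\<forall>x\<in>P. x i = 0 \<or> x i = 1 \<or> x i = 2" using pa_val[OF pa i] by blast
  have cen: "star_div d l (Ff P a) star_center + real_of_int s \<ge> 0"
    using center_ge0[OF fin ne _ sb] d by simp
  have ed1: "star_div d l (Ff P a) (i, t1) \<ge> 1"
  proof -
    have m: "\<forall>x\<in>P. 2 * t1 \<le> real (x i) * t1 + a x" using vals t by (auto simp: a_def)
    have "star_div d l (Ff P a) (i, t1) \<ge> real (y2 i) - real (y1 i)"
      using div_edge[OF fin i _ _ y2(1) _ y1(1)] m y1 y2 t by (simp add: a_def)
    then show ?thesis using y1 y2 by simp
  qed
  have ed2: "star_div d l (Ff P a) (i, t2) \<ge> 1"
  proof -
    have m: "\<forall>x\<in>P. t1 + t2 \<le> real (x i) * t2 + a x" using vals t by (auto simp: a_def)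
    have "star_div d l (Ff P a) (i, t2) \<ge> real (y1 i) - real (y0 i)"
      using div_edge[OF fin i _ _ y1(1) _ y0(1)] m y1 y0 t by (simp add: a_def)
    then show ?thesis using y1 y0 by simp
  qed
  have ed3: "t1 = t2 \<Longrightarrow> star_div d l (Ff P a) (i, t1) \<ge> 2"
  proof -
    assume e: "t1 = t2"
    have m: "\<forall>x\<in>P. 2 * t1 \<le> real (x i) * t1 + a x" using vals t by (auto simp: a_def)
    have "star_div d l (Ff P a) (i, t1) \<ge> real (y2 i) - real (y0 i)"
      using div_edge[OF fin i _ _ y2(1) _ y0(1)] m y0 y2 t e by (simp add: a_def)
    then show ?thesis using y0 y2 by simp
  qed
  show ?thesis
  proof (rule finish[OF fin ne d sb, where l=l and a=a])
    show "star_div d l (Ff P a) star_center + real_of_int s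
              \<ge> (if star_center = (i, t1) then 1 else 0) + (if star_center = (i, t2) then 1 else 0)"
      using cen center_ne2 t by auto
    fix i' t' assume "i' < d" "0 < t'" "t' \<le> l" and h: "(i', t') = (i, t1) \<or> (i', t') = (i, t2)"
    show "star_div d l (Ff P a) (i', t') \<ge> (if (i', t') = (i, t1) then 1 else 0) + (if (i', t') = (i, t2) then 1 else 0)"
      using h ed1 ed2 ed3 by (cases "t1 = t2") auto
  qed
qed

lemma case_diff:
  assumes pa: "permutation_array 2 d P" and d: "d \<ge> 1"
    and sb: "\<forall>x\<in>P. (\<Sum>i<d. int (x i)) \<le> s"
    and i: "i < d" and j: "j < d" and ij: "i \<noteq> j"
    and t: "0 < t1" "t1 \<le> l" "0 < t2" "t2 \<le> l"
  shows "\<exists>f\<in>trop_span P. \<forall>p\<in>star_graph d l.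
           star_div d l f p + (if p = star_center then real_of_int s else 0)
             \<ge> (if p = (i, t1) then 1 else 0) + (if p = (j, t2) then 1 else 0)"
proof -
  have fin: "finite P" using pa_finite[OF pa] .
  have ne: "P \<noteq> {}" using pa_ne[OF pa d] .
  define w where "w = (\<lambda>x::nat\<Rightarrow>nat. (2 - real (x j)) * t2 - (2 - real (x i)) * t1)"
  obtain D u u' z z' where uu: "u \<in> P" "u' \<in> P" "u i \<noteq> u' i" "w u \<le> D" "w u' \<le> D"
    and zz: "z \<in> P" "z' \<in> P" "z j \<noteq> z' j" "D \<le> w z" "D \<le> w z'"
    using choose_D[OF pa i j ij, of w] by blast
  define a where "a = (\<lambda>x::nat\<Rightarrow>nat. max ((2 - real (x i)) * t1 + D) ((2 - real (x j)) * t2))"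
  have cen: "star_div d l (Ff P a) star_center + real_of_int s \<ge> 0"
    using center_ge0[OF fin ne _ sb] d by simp
  have ed1: "star_div d l (Ff P a) (i, t1) \<ge> 1"
  proof -
    have m: "\<forall>x\<in>P. 2 * t1 + D \<le> real (x i) * t1 + a x" by (auto simp: a_def algebra_simps)
    have eu: "real (u i) * t1 + a u = 2 * t1 + D" "real (u' i) * t1 + a u' = 2 * t1 + D"
      using uu unfolding a_def w_def by (auto simp: algebra_simps max_def)
    have "star_div d l (Ff P a) (i, t1) \<ge> real (u i) - real (u' i)"
      using div_edge[OF fin i t(1,2) uu(1) _ uu(2)] m eu by simp
    moreover have "star_div d l (Ff P a) (i, t1) \<ge> real (u' i) - real (u i)"
      using div_edge[OF fin i t(1,2) uu(2) _ uu(1)] m eu by simp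
    ultimately show ?thesis using uu(3) by linarith
  qed
  have ed2: "star_div d l (Ff P a) (j, t2) \<ge> 1"
  proof -
    have m: "\<forall>x\<in>P. 2 * t2 \<le> real (x j) * t2 + a x" by (auto simp: a_def algebra_simps)
    have eu: "real (z j) * t2 + a z = 2 * t2" "real (z' j) * t2 + a z' = 2 * t2"
      using zz unfolding a_def w_def by (auto simp: algebra_simps max_def)
    have "star_div d l (Ff P a) (j, t2) \<ge> real (z j) - real (z' j)"
      using div_edge[OF fin j t(3,4) zz(1) _ zz(2)] m eu by simp
    moreover have "star_div d l (Ff P a) (j, t2) \<ge> real (z' j) - real (z j)"
      using div_edge[OF fin j t(3,4) zz(2) _ zz(1)] m eu by simp
    ultimately show ?thesis using zz(3) by linarith
  qed
  show ?thesis
  proof (rule finish[OF fin ne d sb, where l=l and a=a])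
    show "star_div d l (Ff P a) star_center + real_of_int s
              \<ge> (if star_center = (i, t1) then 1 else 0) + (if star_center = (j, t2) then 1 else 0)"
      using cen center_ne2 t by auto
    fix i' t' assume "i' < d" "0 < t'" "t' \<le> l" and h: "(i', t') = (i, t1) \<or> (i', t') = (j, t2)"
    show "star_div d l (Ff P a) (i', t') \<ge> (if (i', t') = (i, t1) then 1 else 0) + (if (i', t') = (j, t2) then 1 else 0)"
      using h ed1 ed2 ij by auto
  qed
qed

theorem mainTheorem18:
  fixes d :: nat and P :: "(nat \<Rightarrow> nat) set" and l :: real and s :: int
    and v1 v2 :: "nat \<times> real"
  assumes "d \<ge> 1"
    and "permutation_array 2 d P"
    and "l > 0"
    and "\<forall>x\<in>P. (\<Sum>i<d. int (x i)) \<le> s"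
    and "v1 \<in> star_graph d l" and "v2 \<in> star_graph d l"
  shows "\<exists>f\<in>trop_span P. \<forall>p\<in>star_graph d l.
           star_div d l f p + (if p = star_center then real_of_int s else 0)
             \<ge> (if p = v1 then 1 else 0) + (if p = v2 then 1 else 0)"
proof -
  note d = assms(1) and pa = assms(2) and sb = assms(4)
  have v1: "v1 = star_center \<or> (\<exists>i t. v1 = (i, t) \<and> i < d \<and> 0 < t \<and> t \<le> l)"
    using assms(5) unfolding star_graph_def by auto
  have v2: "v2 = star_center \<or> (\<exists>i t. v2 = (i, t) \<and> i < d \<and> 0 < t \<and> t \<le> l)"
    using assms(6) unfolding star_graph_def by auto
  show ?thesis
  proof (cases "v1 = star_center")
    case c1: True
    show ?thesis
    proof (cases "v2 = star_center")
      case True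
      then show ?thesis using case_CC[OF pa d sb, of l] c1 by simp
    next
      case False
      then obtain i t where "v2 = (i, t)" "i < d" "0 < t" "t \<le> l" using v2 by blast
      then show ?thesis using case_CE[OF pa d sb, of i t l] c1 by simp
    qed
  next
    case c1: False
    then obtain i t where it: "v1 = (i, t)" "i < d" "0 < t" "t \<le> l" using v1 by blast
    show ?thesis
    proof (cases "v2 = star_center")
      case True
      obtain f where f: "f \<in> trop_span P" and H: "\<forall>p\<in>star_graph d l.
           star_div d l f p + (if p = star_center then real_of_int s else 0)
             \<ge> (if p = star_center then 1 else 0) + (if p = (i, t) then 1 else 0)"
        using case_CE[OF pa d sb it(2-4)] by blast
      show ?thesis using H True it(1) by (intro bexI[OF _ f]) (simp add: add.commute)
    next
      case False
      then obtain j t2 where jt: "v2 = (j, t2)" "j < d" "0 < t2" "t2 \<le> l" using v2 by blast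
      show ?thesis
      proof (cases "i = j")
        case ij: True
        show ?thesis
        proof (cases "t \<le> t2")
          case True
          then show ?thesis using case_same[OF pa d sb it(2,3) True jt(4)] it jt ij by simp
        next
          case False
          obtain f where f: "f \<in> trop_span P" and H: "\<forall>p\<in>star_graph d l.
             star_div d l f p + (if p = star_center then real_of_int s else 0)
               \<ge> (if p = (i, t2) then 1 else 0) + (if p = (i, t) then 1 else 0)"
            using case_same[OF pa d sb it(2) jt(3), of t l] False it(4) by auto
          show ?thesis using H it(1) jt(1) ij by (intro bexI[OF _ f]) (simp add: add.commute)
        qed
      next
        case False
        then show ?thesis using case_diff[OF pa d sb it(2) jt(2) False it(3,4) jt(3,4)] it jt by simp
      qed
    qed
  qed
qed

end
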